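(* Let $R$ be a commutative ring with identity and $M$ an $R$-module. If $M$ satisfies the dual of strong Property $\mathcal{A}$, then $W_R(M)$ is an ideal of $R$ (i.e. $M$ is secondal). Conversely, if $R$ is a principal ideal domain and $M$ is a secondal $R$-module, then $M$ satisfies the dual of strong Property $\mathcal{A}$.
   Context: All rings are commutative with identity. For an $R$-module $M$, $W_R(M)=\{r\in R : rM\neq M\}$. A proper submodule $L$ of $M$ is completely irreducible if whenever $L=\bigcap_{i\in I}L_i$ for a family $\{L_i\}_{i\in I}$ of submodules of $M$, then $L=L_i$ for some $i$. An $R$-module $M$ satisfies the dual of strong Property $\mathcal{A}$ if for any $a_1,\dots,a_n\in W_R(M)$ there exists a completely irreducible submodule $L$ of $M$ with $a_iM\subseteq L\neq M$ for all $i=1,\dots,n$. A nonzero $R$-module (or submodule) $N$ is secondal if $W_R(N)$ is an ideal of $R$. *)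

theory Defs
  imports Main
begin

text \<open>Modules are represented as in HOL.Modules: the ring R is a type 'a of class
comm_ring_1, the module M is the whole type 'b with scalar multiplication scale,
assumed to satisfy the module axioms (is_module).\<close>

definition is_module :: "('a::comm_ring_1 \<Rightarrow> 'b::ab_group_add \<Rightarrow> 'b) \<Rightarrow> bool" where
  "is_module scale \<longleftrightarrow>
     (\<forall>a x y. scale a (x + y) = scale a x + scale a y) \<and>
     (\<forall>a b x. scale (a + b) x = scale a x + scale b x) \<and>
     (\<forall>a b x. scale a (scale b x) = scale (a * b) x) \<and>
     (\<forall>x. scale 1 x = x)"

definition submodule :: "('a::comm_ring_1 \<Rightarrow> 'b::ab_group_add \<Rightarrow> 'b) \<Rightarrow> 'b set \<Rightarrow> bool" where
  "submodule scale S \<longleftrightarrow> 0 \<in> S \<and> (\<forall>x\<in>S. \<forall>y\<in>S. x + y \<in> S) \<and> (\<forall>c. \<forall>x\<in>S. scale c x \<in> S)"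

definition W_R :: "('a::comm_ring_1 \<Rightarrow> 'b::ab_group_add \<Rightarrow> 'b) \<Rightarrow> 'a set" where
  "W_R scale = {r. range (scale r) \<noteq> UNIV}"

definition ring_ideal :: "'a::comm_ring_1 set \<Rightarrow> bool" where
  "ring_ideal I \<longleftrightarrow> 0 \<in> I \<and> (\<forall>x\<in>I. \<forall>y\<in>I. x + y \<in> I) \<and> (\<forall>r. \<forall>x\<in>I. r * x \<in> I)"

definition completely_irreducible ::
  "('a::comm_ring_1 \<Rightarrow> 'b::ab_group_add \<Rightarrow> 'b) \<Rightarrow> 'b set \<Rightarrow> bool" where
  "completely_irreducible scale L \<longleftrightarrow>
     submodule scale L \<and> L \<noteq> UNIV \<and>
     (\<forall>F. (\<forall>X\<in>F. submodule scale X) \<and> L = \<Inter>F \<longrightarrow> L \<in> F)"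

definition dual_strong_A :: "('a::comm_ring_1 \<Rightarrow> 'b::ab_group_add \<Rightarrow> 'b) \<Rightarrow> bool" where
  "dual_strong_A scale \<longleftrightarrow>
     (\<forall>A. finite A \<and> A \<noteq> {} \<and> A \<subseteq> W_R scale \<longrightarrow>
        (\<exists>L. completely_irreducible scale L \<and> (\<forall>a\<in>A. range (scale a) \<subseteq> L)))"

definition secondal :: "('a::comm_ring_1 \<Rightarrow> 'b::ab_group_add \<Rightarrow> 'b) \<Rightarrow> bool" where
  "secondal scale \<longleftrightarrow> (UNIV :: 'b set) \<noteq> {0} \<and> ring_ideal (W_R scale)"

definition is_pid :: "'a::comm_ring_1 itself \<Rightarrow> bool" where
  "is_pid _ \<longleftrightarrow> (0::'a) \<noteq> 1 \<and> (\<forall>x y::'a. x * y = 0 \<longrightarrow> x = 0 \<or> y = 0) \<and>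
     (\<forall>I::'a set. ring_ideal I \<longrightarrow> (\<exists>g. I = {g * r | r. True}))"

end

theory Submission
  imports Defs
begin

lemma scale_zero:
  assumes "is_module scale" shows "scale a 0 = 0"
proof -
  have "scale a (0+0) = scale a 0 + scale a 0" using assms unfolding is_module_def by blast
  thus ?thesis by simp
qed

lemma range_sub_mult:
  assumes "is_module scale" shows "range (scale (r * a)) \<subseteq> range (scale a)"
proof
  fix y assume "y \<in> range (scale (r*a))"
  then obtain x where "y = scale (r*a) x" by auto
  also have "\<dots> = scale (a*r) x" by (simp add: mult.commute)
  also have "\<dots> = scale a (scale r x)" using assms unfolding is_module_def by metis
  finally show "y \<in> range (scale a)" by auto
qed

lemma range_submodule:
  assumes "is_module scale" shows "submodule scale (range (scale d))"
  unfolding submodule_def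
proof (intro conjI ballI allI)
  show "0 \<in> range (scale d)" using scale_zero[OF assms] by (metis rangeI)
next
  fix x y assume "x \<in> range (scale d)" "y \<in> range (scale d)"
  then obtain u v where "x = scale d u" "y = scale d v" by auto
  then have "x + y = scale d (u+v)" using assms unfolding is_module_def by metis
  thus "x + y \<in> range (scale d)" by auto
next
  fix c x assume "x \<in> range (scale d)"
  then obtain u where "x = scale d u" by auto
  then have "scale c x = scale (c*d) u" using assms unfolding is_module_def by metis
  thus "scale c x \<in> range (scale d)" using range_sub_mult[OF assms] by blast
qed

lemma W_sum:
  assumes "is_module scale" "ring_ideal (W_R scale)" "finite B" "B \<subseteq> W_R scale"
  shows "(\<Sum>a\<in>B. c a * a) \<in> W_R scale"
  using assms(3,4)
proof (induction B rule: finite_induct)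
  case empty then show ?case using assms(2) unfolding ring_ideal_def by simp
next
  case (insert x F)
  then show ?case using assms(2) unfolding ring_ideal_def by simp
qed

lemma part1:
  assumes mod: "is_module scale" and nz: "(UNIV :: 'b set) \<noteq> {0}" and D: "dual_strong_A scale"
  shows "secondal (scale :: 'a::comm_ring_1 \<Rightarrow> 'b::ab_group_add \<Rightarrow> 'b)"
  unfolding secondal_def ring_ideal_def
proof (intro conjI ballI allI nz)
  have "range (scale 0) = {0}"
  proof -
    have "scale 0 x = 0" for x
    proof -
      have "scale (0+0) x = scale 0 x + scale 0 x" using mod unfolding is_module_def by blast
      thus ?thesis by simp
    qed
    thus ?thesis by auto
  qed
  thus "0 \<in> W_R scale" using nz unfolding W_R_def by auto
next
  fix r x assume "x \<in> W_R scale"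
  thus "r * x \<in> W_R scale" using range_sub_mult[OF mod, of r x] unfolding W_R_def by auto
next
  fix x y assume xy: "x \<in> W_R scale" "y \<in> W_R scale"
  then obtain L where L: "completely_irreducible scale L" "\<forall>a\<in>{x,y}. range (scale a) \<subseteq> L"
    using D unfolding dual_strong_A_def by (metis empty_not_insert finite.emptyI finite.insertI
        insert_subset empty_subsetI)
  have sub: "submodule scale L" "L \<noteq> UNIV" using L(1) unfolding completely_irreducible_def by auto
  have "range (scale (x+y)) \<subseteq> L"
  proof
    fix z assume "z \<in> range (scale (x+y))"
    then obtain u where "z = scale (x+y) u" by auto
    then have "z = scale x u + scale y u" using mod unfolding is_module_def by metis
    moreover have "scale x u \<in> L" "scale y u \<in> L" using L(2) by auto
    ultimately show "z \<in> L" using sub(1) unfolding submodule_def by auto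
  qed
  thus "x + y \<in> W_R scale" using sub(2) unfolding W_R_def by auto
qed

lemma exists_ci:
  assumes mod: "is_module scale" and S: "submodule scale S" and m: "m \<notin> S"
  shows "\<exists>L. completely_irreducible scale L \<and> S \<subseteq> L"
proof -
  define \<A> where "\<A> = {T. submodule scale T \<and> S \<subseteq> T \<and> m \<notin> T}"
  have ne: "\<A> \<noteq> {}" using S m unfolding \<A>_def by auto
  have ch: "\<Union>\<C> \<in> \<A>" if "\<C> \<noteq> {}" "subset.chain \<A> \<C>" for \<C>
  proof -
    have C: "\<C> \<subseteq> \<A>" "\<forall>X\<in>\<C>. \<forall>Y\<in>\<C>. X \<subseteq> Y \<or> Y \<subseteq> X"
      using that(2) unfolding subset.chain_def by auto
    have "submodule scale (\<Union>\<C>)" unfolding submodule_def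
    proof (intro conjI ballI allI)
      show "0 \<in> \<Union>\<C>" using that(1) C(1) unfolding \<A>_def submodule_def by auto
    next
      fix x y assume "x \<in> \<Union>\<C>" "y \<in> \<Union>\<C>"
      then obtain X Y where XY: "X \<in> \<C>" "Y \<in> \<C>" "x \<in> X" "y \<in> Y" by auto
      show "x + y \<in> \<Union>\<C>"
      proof (cases "X \<subseteq> Y")
        case True
        have "Y \<in> \<A>" using XY C(1) by auto
        then have "x + y \<in> Y" using XY True unfolding \<A>_def submodule_def by blast
        thus ?thesis using XY by auto
      next
        case False
        then have "Y \<subseteq> X" using C(2) XY by blast
        have "X \<in> \<A>" using XY C(1) by auto
        then have "x + y \<in> X" using XY \<open>Y \<subseteq> X\<close> unfolding \<A>_def submodule_def by blast
        thus ?thesis using XY by auto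
      qed
    next
      fix c x assume "x \<in> \<Union>\<C>"
      then obtain X where "X \<in> \<C>" "x \<in> X" by auto
      moreover then have "X \<in> \<A>" using C(1) by auto
      ultimately show "scale c x \<in> \<Union>\<C>" unfolding \<A>_def submodule_def by blast
    qed
    moreover have "S \<subseteq> \<Union>\<C>" using that(1) C(1) unfolding \<A>_def by auto
    moreover have "m \<notin> \<Union>\<C>" using C(1) unfolding \<A>_def by auto
    ultimately show ?thesis unfolding \<A>_def by auto
  qed
  obtain L where L: "L \<in> \<A>" "\<forall>X\<in>\<A>. L \<subseteq> X \<longrightarrow> X = L"
    using subset_Zorn_nonempty[OF ne ch] by blast
  have "completely_irreducible scale L" unfolding completely_irreducible_def
  proof (intro conjI allI impI)
    show "submodule scale L" using L unfolding \<A>_def by auto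
    show "L \<noteq> UNIV" using L unfolding \<A>_def by auto
  next
    fix F assume F: "(\<forall>X\<in>F. submodule scale X) \<and> L = \<Inter>F"
    have "m \<notin> \<Inter>F" using F L(1) unfolding \<A>_def by auto
    then obtain X where X: "X \<in> F" "m \<notin> X" by auto
    have "L \<subseteq> X" using F X by auto
    moreover have "X \<in> \<A>" using X F \<open>L \<subseteq> X\<close> L(1) unfolding \<A>_def by auto
    ultimately have "X = L" using L(2) by auto
    thus "L \<in> F" using X by simp
  qed
  moreover have "S \<subseteq> L" using L unfolding \<A>_def by auto
  ultimately show ?thesis by blast
qed

lemma part2:
  assumes mod: "is_module scale" and pid: "is_pid TYPE('a)"
    and sec: "secondal (scale :: 'a::comm_ring_1 \<Rightarrow> 'b::ab_group_add \<Rightarrow> 'b)"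
  shows "dual_strong_A scale"
  unfolding dual_strong_A_def
proof (intro allI impI)
  fix A assume A: "finite A \<and> A \<noteq> {} \<and> A \<subseteq> W_R scale"
  have idW: "ring_ideal (W_R scale)" using sec unfolding secondal_def by auto
  define I where "I = {(\<Sum>a\<in>A. c a * a) | c. True}"
  have idI: "ring_ideal I" unfolding ring_ideal_def I_def
  proof (intro conjI ballI allI)
    show "0 \<in> {(\<Sum>a\<in>A. c a * a) | c. True}" by (rule CollectI, rule exI[of _ "\<lambda>_. 0"]) simp
  next
    fix x y assume "x \<in> {(\<Sum>a\<in>A. c a * a) | c. True}" "y \<in> {(\<Sum>a\<in>A. c a * a) | c. True}"
    then obtain c1 c2 where "x = (\<Sum>a\<in>A. c1 a * a)" "y = (\<Sum>a\<in>A. c2 a * a)" by auto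
    then have "x + y = (\<Sum>a\<in>A. (c1 a + c2 a) * a)" by (simp add: sum.distrib distrib_right)
    thus "x + y \<in> {(\<Sum>a\<in>A. c a * a) | c. True}" unfolding mem_Collect_eq by (intro exI[of _ "\<lambda>a. c1 a + c2 a"]) simp
  next
    fix r x assume "x \<in> {(\<Sum>a\<in>A. c a * a) | c. True}"
    then obtain c where "x = (\<Sum>a\<in>A. c a * a)" by auto
    then have "r * x = (\<Sum>a\<in>A. (r * c a) * a)" by (simp add: sum_distrib_left mult.assoc)
    thus "r * x \<in> {(\<Sum>a\<in>A. c a * a) | c. True}" unfolding mem_Collect_eq by (intro exI[of _ "\<lambda>a. r * c a"]) simp
  qed
  obtain g where g: "I = {g * r | r. True}" using pid idI unfolding is_pid_def by blast
  have "g \<in> I" using g by (metis (mono_tags, lifting) mem_Collect_eq mult_1_right)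
  hence gW: "g \<in> W_R scale" unfolding I_def using W_sum[OF mod idW] A by auto
  have aI: "a \<in> I" if "a \<in> A" for a
  proof -
    have "(\<Sum>b\<in>A. (if b = a then 1 else 0) * b) = a"
    proof -
      have "(\<Sum>b\<in>A. (if b = a then 1 else 0) * b) = (\<Sum>b\<in>A. (if b = a then b else 0))"
        by (intro sum.cong refl) simp
      also have "\<dots> = a" using A that by (simp add: sum.delta)
      finally show ?thesis .
    qed
    thus ?thesis unfolding I_def mem_Collect_eq by (intro exI[of _ "\<lambda>b. if b = a then 1 else 0"]) simp
  qed
  have sub: "range (scale a) \<subseteq> range (scale g)" if aA: "a \<in> A" for a
  proof -
    obtain r where "a = g * r" using aI[OF aA] g by auto
    thus ?thesis using range_sub_mult[OF mod, of r g] by (simp add: mult.commute)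
  qed
  obtain m where "m \<notin> range (scale g)" using gW unfolding W_R_def by auto
  then obtain L where "completely_irreducible scale L" "range (scale g) \<subseteq> L"
    using exists_ci[OF mod range_submodule[OF mod]] by blast
  thus "\<exists>L. completely_irreducible scale L \<and> (\<forall>a\<in>A. range (scale a) \<subseteq> L)"
    using sub by blast
qed

theorem theorem2p5:
  fixes scale :: "'a::comm_ring_1 \<Rightarrow> 'b::ab_group_add \<Rightarrow> 'b"
  assumes "is_module scale"
  shows "((UNIV :: 'b set) \<noteq> {0} \<and> dual_strong_A scale \<longrightarrow> secondal scale) \<and>
         (is_pid TYPE('a) \<and> secondal scale \<longrightarrow> dual_strong_A scale)"
  using part1[OF assms] part2[OF assms] by blast

end
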